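(* There exist $\mathfrak{c}\in(0,2)$ and a constant $C>0$ such that $$\int_{\mathbb{R}}\big||\phi_c(x)|^4-\phi_0(x)^4\big|\,|\mathfrak{z}(x)|^2\,dx\le C\,c^2\,\|\mathfrak{z}\|^2_{\mathcal{H}_{c^*}}$$ for all $c,c^*$ with $|c|,|c^*|<\mathfrak{c}$ and every $\mathfrak{z}\in\mathcal{H}_{c^*}$. Moreover, $\mathcal{H}_c=\mathcal{H}_0$ (as sets) for all $|c|<\mathfrak{c}$, and there exist constants $\sigma_1,\sigma_2>0$ such that $$\sigma_1\|\mathfrak{z}\|^2_{\mathcal{H}_0}\le\|\mathfrak{z}\|^2_{\mathcal{H}_c}\le\sigma_2\|\mathfrak{z}\|^2_{\mathcal{H}_0}$$ for all $|c|<\mathfrak{c}$ and all $\mathfrak{z}\in\mathcal{H}_0$.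
   Context: Black soliton: $\phi_0(x)=\sqrt{2}\,\tanh(x)/\sqrt{3-\tanh^2(x)}$, a stationary real solution of the quintic Gross–Pitaevskii equation $iu_t+u_{xx}=(|u|^4-1)u$. Dark soliton profiles: for $0<|c|<2$, set - $\kappa(c)=\sqrt{4-c^2}/2$; - $\mu_1(c)=\dfrac{3c^2-4+2\sqrt{3c^2+4}}{\sqrt{18c^2-8+(3c^2+4)^{3/2}}}$; - $\mu_2(c)=\dfrac{3c\sqrt{4-c^2}}{\sqrt{18c^2-8+(3c^2+4)^{3/2}}}$; - $\mu(c)$ defined by $\mu_1^2+\mu_2^2=2+2\mu$; - $\phi_c(x)=\dfrac{i\mu_1(c)+\mu_2(c)\tanh(\kappa(c)x)}{\sqrt{2}\sqrt{1+\mu(c)\tanh^2(\kappa(c)x)}}$. For $c=0$, $\phi_c$ means $\phi_0$. Weights: $\eta_c=1-|\phi_c|^4$ (so $\eta_0=1-\phi_0^4$). Spaces: for $|c|<2$, $\mathcal{H}_c$ is the space of continuous functions $f:\mathbb{R}\to\mathbb{C}$ with $f'\in L^2(\mathbb{R})$ and $\eta_c^{1/2}f\in L^2(\mathbb{R})$, with norm $$\|f\|_{\mathcal{H}_c}=\Big(\int_{\mathbb{R}}\big(|f'|^2+\eta_c|f|^2\big)\,dx\Big)^{1/2}.$$ *)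

theory Defs
  imports "HOL-Analysis.Analysis"
begin

definition phi0 :: "real \<Rightarrow> real" where
  "phi0 x = sqrt 2 * tanh x / sqrt (3 - (tanh x)^2)"

definition kappa :: "real \<Rightarrow> real" where
  "kappa c = sqrt (4 - c^2) / 2"

definition dnm :: "real \<Rightarrow> real" where
  "dnm c = sqrt (18 * c^2 - 8 + (3 * c^2 + 4) * sqrt (3 * c^2 + 4))"

definition mu1 :: "real \<Rightarrow> real" where
  "mu1 c = (3 * c^2 - 4 + 2 * sqrt (3 * c^2 + 4)) / dnm c"

definition mu2 :: "real \<Rightarrow> real" where
  "mu2 c = 3 * c * sqrt (4 - c^2) / dnm c"

definition mu :: "real \<Rightarrow> real" where
  "mu c = ((mu1 c)^2 + (mu2 c)^2 - 2) / 2"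

definition phi :: "real \<Rightarrow> real \<Rightarrow> complex" where
  "phi c x = (if c = 0 then complex_of_real (phi0 x)
     else (\<i> * complex_of_real (mu1 c) + complex_of_real (mu2 c * tanh (kappa c * x)))
          / complex_of_real (sqrt 2 * sqrt (1 + mu c * (tanh (kappa c * x))^2)))"

definition eta :: "real \<Rightarrow> real \<Rightarrow> real" where
  "eta c x = 1 - (cmod (phi c x))^4"

text \<open>g is a (weak) derivative of f: g is locally integrable and f is its primitive,
  i.e. f is locally absolutely continuous with a.e. derivative g.\<close>
definition weak_deriv :: "(real \<Rightarrow> complex) \<Rightarrow> (real \<Rightarrow> complex) \<Rightarrow> bool" where
  "weak_deriv f g \<longleftrightarrow>
     (\<forall>a b. a \<le> b \<longrightarrow> set_integrable lborel {a..b} g \<and>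
        f b - f a = (LINT t:{a..b}|lborel. g t))"

definition L2 :: "(real \<Rightarrow> complex) \<Rightarrow> bool" where
  "L2 g \<longleftrightarrow> g \<in> borel_measurable lborel \<and> integrable lborel (\<lambda>x. (cmod (g x))^2)"

definition Hspace :: "real \<Rightarrow> (real \<Rightarrow> complex) set" where
  "Hspace c = {f. continuous_on UNIV f \<and> (\<exists>g. weak_deriv f g \<and> L2 g) \<and>
                  f \<in> borel_measurable lborel \<and>
                  integrable lborel (\<lambda>x. eta c x * (cmod (f x))^2)}"

definition dH :: "(real \<Rightarrow> complex) \<Rightarrow> (real \<Rightarrow> complex)" where
  "dH f = (SOME g. weak_deriv f g \<and> L2 g)"

definition Hnorm :: "real \<Rightarrow> (real \<Rightarrow> complex) \<Rightarrow> real" where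
  "Hnorm c f = sqrt ((\<integral>x. (cmod (dH f x))^2 \<partial>lborel)
                    + (\<integral>x. eta c x * (cmod (f x))^2 \<partial>lborel))"

end

theory Submission
  imports Defs "HOL-Probability.Distributions"
begin

definition Uf :: "real \<Rightarrow> real \<Rightarrow> real" where
  "Uf s q = (16 - s^2) * q / (4 * s + 2 * (4 - s) * q)"

definition sC :: "real \<Rightarrow> real" where "sC c = sqrt (3*c^2+4)"

lemma tanh_sq_lt1: "(tanh (y::real))^2 < 1"
  using tanh_real_bounds[of y] by (simp add: abs_square_less_1 abs_less_iff)

lemma sC_props: assumes "c^2 < 1"
  shows "sC c \<ge> 2" "sC c < 3" "(sC c)^2 = 3*c^2+4" "c \<noteq> 0 \<Longrightarrow> sC c > 2"
proof -
  show "(sC c)^2 = 3*c^2+4" unfolding sC_def by simp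
  show "sC c \<ge> 2" unfolding sC_def by (rule real_le_rsqrt) simp
  show "sC c < 3" unfolding sC_def using assms by (intro real_sqrt_less_iff[THEN iffD2, of _ "3^2", simplified]) auto
  show "sC c > 2" if "c \<noteq> 0" unfolding sC_def using that by (intro real_less_rsqrt) simp
qed

lemma phi_mod:
  assumes c1: "c^2 < 1"
  shows "(cmod (phi c x))^2 = 1 - Uf (sC c) (1 - (tanh (kappa c * x))^2)"
proof (cases "c = 0")
  case True
  define t where "t = tanh x"
  have t1: "t^2 < 1" unfolding t_def by (rule tanh_sq_lt1)
  have k: "kappa 0 = 1" by (simp add: kappa_def)
  have s: "sC 0 = 2" by (simp add: sC_def)
  have "(cmod (phi c x))^2 = (phi0 x)^2" using True by (simp add: phi_def)
  also have "\<dots> = 2 * t^2 / (3 - t^2)" unfolding phi0_def t_def[symmetric]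
    using t1 by (simp add: power_mult_distrib power_divide)
  also have "\<dots> = 1 - Uf 2 (1 - t^2)" unfolding Uf_def using t1
    by (simp add: field_simps)
  finally show ?thesis using True k s t_def by simp
next
  case False
  define s where "s = sC c"
  have s2: "s > 2" and s3: "s < 3" and ss: "s^2 = 3*c^2+4" using sC_props[OF c1] False by (auto simp: s_def)
  define T where "T = tanh (kappa c * x)"
  have T1: "T^2 < 1" unfolding T_def by (rule tanh_sq_lt1)
  have T0: "T^2 \<ge> 0" by simp
  have dnm: "dnm c = (s+4) * sqrt (s-2)"
  proof -
    have "18 * c^2 - 8 + (3 * c^2 + 4) * sqrt (3 * c^2 + 4) = (s-2)*(s+4)^2"
      using ss unfolding s_def sC_def[symmetric] by (simp add: sC_def[symmetric] power2_eq_square power3_eq_cube algebra_simps)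
    then show ?thesis unfolding dnm_def using s2 by (simp add: real_sqrt_mult)
  qed
  define a where "a = mu1 c"
  define b where "b = mu2 c"
  define m where "m = mu c"
  have sq2: "sqrt (s-2) > 0" using s2 by simp
  have a: "a = sqrt (s - 2)"
  proof -
    have "3 * c^2 - 4 + 2 * sqrt (3 * c^2 + 4) = (s-2)*(s+4)"
      using ss unfolding s_def sC_def by (simp add: algebra_simps power2_eq_square)
    then have "a = (s-2)*(s+4) / ((s+4) * sqrt (s-2))" unfolding a_def mu1_def dnm by simp
    also have "\<dots> = (s-2)/ sqrt(s-2)" using s2 by simp
    also have "\<dots> = sqrt (s-2)" using s2 by (metis less_eq_real_def real_div_sqrt diff_ge_0_iff_ge)
    finally show ?thesis .
  qed
  have a2: "a^2 = s - 2" using a s2 by simp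
  have b2: "b^2 = (s+2)*(4-s)/(s+4)"
  proof -
    have "b^2 = 9*c^2*(4-c^2) / ((s+4)^2 * (s-2))" unfolding b_def mu2_def dnm
      using c1 s2 by (simp add: power_mult_distrib power_divide)
    also have "9*c^2*(4-c^2) = (s-2)*(s+2)*(4-s)*(4+s)"
    proof -
      have "(s-2)*(s+2)*(4-s)*(4+s) = (s^2-4)*(16-s^2)" by (simp add: algebra_simps power2_eq_square)
      then show ?thesis unfolding ss by (simp add: algebra_simps power2_eq_square)
    qed
    also have "(s-2)*(s+2)*(4-s)*(4+s) / ((s+4)^2 * (s-2)) = (s+2)*(4-s)/(s+4)"
    proof -
      have n1: "s - 2 \<noteq> 0" "s + 4 \<noteq> 0" using s2 by auto
      have e1: "(s-2)*(s+2)*(4-s)*(4+s) = ((s+2)*(4-s)) * ((s+4)*(s-2))" by (simp add: algebra_simps)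
      have e2: "(s+4)^2 * (s-2) = (s+4) * ((s+4)*(s-2))" by (simp add: algebra_simps power2_eq_square)
      have n3: "(s+4)*(s-2) \<noteq> 0" using n1 by simp
      show ?thesis unfolding e1 e2 by (rule mult_divide_mult_cancel_right[OF n3])
    qed
    finally show ?thesis .
  qed
  have m: "m = (s-4)/(s+4)"
    unfolding m_def mu_def a_def[symmetric] b_def[symmetric] a2 b2 using s2 by (simp add: field_simps)
  have den: "1 + m * T^2 > 0"
  proof -
    have "(4-s)/(s+4) * T^2 \<le> (4-s)/(s+4) * 1" using T1 s2 s3 by (intro mult_left_mono) auto
    moreover have "(4-s)/(s+4) < 1" using s2 by simp
    moreover have "(s-4)/(s+4)*T^2 = -((4-s)/(s+4)*T^2)"
      by (metis minus_diff_eq minus_divide_left mult_minus_left)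
    ultimately show ?thesis unfolding m by (smt (verit))
  qed
  have "phi c x = (\<i> * complex_of_real a + complex_of_real (b * T)) / complex_of_real (sqrt 2 * sqrt (1 + m * T^2))"
    using False by (simp add: phi_def a_def b_def m_def T_def)
  then have re: "Re (phi c x) = b * T / (sqrt 2 * sqrt (1 + m * T^2))"
     and im: "Im (phi c x) = a / (sqrt 2 * sqrt (1 + m * T^2))" by simp_all
  have r2: "(sqrt 2 * sqrt (1 + m * T^2))^2 = 2 * (1 + m*T^2)" using den by (simp add: power_mult_distrib)
  have "(cmod (phi c x))^2 = (b * T / (sqrt 2 * sqrt (1 + m * T^2)))^2 + (a / (sqrt 2 * sqrt (1 + m * T^2)))^2"
    by (simp add: cmod_power2 re im)
  also have "\<dots> = (a^2 + b^2 * T^2) / (2 * (1 + m*T^2))"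
    unfolding power_divide r2 by (simp add: power_mult_distrib add_divide_distrib)
  also have "\<dots> = 1 - Uf s (1 - T^2)"
  proof -
    define q where "q = T^2"
    define D1 where "D1 = (s+4) + (s-4)*q"
    have s4: "s + 4 \<noteq> 0" using s2 by simp
    have e1: "1 + (s-4)/(s+4) * q = D1/(s+4)" unfolding D1_def using s4 by (simp add: field_simps)
    have "(4-s)*q \<le> (4-s)*1" using T1 s3 unfolding q_def by (intro mult_left_mono) auto
    then have D1: "D1 > 0" unfolding D1_def using s2 by (simp add: algebra_simps)
    have e2: "s - 2 + (s+2)*(4-s)/(s+4) * q = ((s-2)*(s+4) + (s+2)*(4-s)*q)/(s+4)"
      using s4 by (simp add: field_simps)
    have e3: "4 * s + 2 * (4 - s) * (1 - q) = 2 * D1" unfolding D1_def by (simp add: algebra_simps)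
    have "(a^2 + b^2 * T^2) / (2 * (1 + m*T^2)) = (s - 2 + (s+2)*(4-s)/(s+4) * q) / (2 * (1 + (s-4)/(s+4) * q))"
      unfolding a2 b2 m q_def by simp
    also have "\<dots> = (((s-2)*(s+4) + (s+2)*(4-s)*q)/(s+4)) / (2 * (D1/(s+4)))" unfolding e1 e2 ..
    also have "\<dots> = ((s-2)*(s+4) + (s+2)*(4-s)*q)/(2*D1)" using s4 by simp
    also have "\<dots> = (2*D1 - (16 - s^2)*(1-q))/(2*D1)"
      unfolding D1_def by (simp add: algebra_simps power2_eq_square)
    also have "\<dots> = 1 - Uf s (1 - q)" unfolding Uf_def e3 using D1 by (simp add: diff_divide_distrib)
    finally show ?thesis unfolding q_def .
  qed
  finally show ?thesis unfolding s_def T_def .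
qed

lemma amgm_eps:
  fixes t e :: real assumes "e > 0"
  shows "t \<le> e/2 + t^2/(2*e)"
proof -
  have "0 \<le> (t - e)^2" by simp
  then have "2*e*t \<le> e^2 + t^2" by (simp add: power2_eq_square algebra_simps)
  moreover have "e/2 + t^2/(2*e) = (e^2 + t^2)/(2*e)" using assms by (simp add: field_simps power2_eq_square)
  ultimately show ?thesis using assms by (simp add: pos_le_divide_eq mult.commute mult.left_commute)
qed

lemma interval_bound:
  assumes wd: "weak_deriv z g" and l2: "L2 g" and e: "e > 0" and ab: "a \<le> b"
  shows "cmod (z b - z a) \<le> e*(b-a)/2 + (\<integral>x. (cmod (g x))^2 \<partial>lborel)/(2*e)"
proof -
  define A where "A = (\<integral>x. (cmod (g x))^2 \<partial>lborel)"
  have gm: "g \<in> borel_measurable lborel" and gi: "integrable lborel (\<lambda>x. (cmod (g x))^2)"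
    using l2 by (auto simp: L2_def)
  have A0: "A \<ge> 0" unfolding A_def by simp
  have nA: "(\<integral>\<^sup>+x. ennreal ((cmod (g x))^2) \<partial>lborel) = ennreal A"
    unfolding A_def by (rule nn_integral_eq_integral[OF gi]) auto
  have si: "set_integrable lborel {a..b} g" and eq: "z b - z a = (LINT t:{a..b}|lborel. g t)"
    using wd ab by (auto simp: weak_deriv_def)
  have "ennreal (cmod (z b - z a)) \<le> (\<integral>\<^sup>+t. norm (indicator {a..b} t *\<^sub>R g t) \<partial>lborel)"
    unfolding eq set_lebesgue_integral_def
    by (rule integral_norm_bound_ennreal) (use si in \<open>simp add: set_integrable_def\<close>)
  also have "\<dots> \<le> (\<integral>\<^sup>+t. ennreal (e/2) * indicator {a..b} t + ennreal (1/(2*e)) * ennreal ((cmod (g t))^2) \<partial>lborel)"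
  proof (rule nn_integral_mono)
    fix t
    have "cmod (g t) \<le> e/2 + (cmod (g t))^2/(2*e)" by (rule amgm_eps[OF e])
    then show "ennreal (norm (indicator {a..b} t *\<^sub>R g t))
       \<le> ennreal (e/2) * indicator {a..b} t + ennreal (1/(2*e)) * ennreal ((cmod (g t))^2)"
      using e by (auto split: split_indicator simp: ennreal_mult[symmetric] ennreal_plus[symmetric] simp del: ennreal_plus intro!: ennreal_leI)
  qed
  also have "\<dots> = ennreal (e/2) * ennreal (b - a) + ennreal (1/(2*e)) * ennreal A"
    using ab gm by (subst nn_integral_add) (auto simp: nn_integral_cmult nA)
  also have "\<dots> = ennreal (e*(b-a)/2 + A/(2*e))"
    using e ab A0 by (simp add: ennreal_mult[symmetric] ennreal_plus[symmetric] del: ennreal_plus)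
  finally show ?thesis unfolding A_def
    using e ab A0 by (subst (asm) ennreal_le_iff) (auto simp: A_def)
qed


lemma sq_sum_le: fixes p q :: real shows "(p+q)^2 \<le> 2*p^2 + 2*q^2"
proof -
  have "0 \<le> (p-q)^2" by simp
  then show ?thesis by (simp add: power2_eq_square algebra_simps)
qed

lemma hardy_pointwise:
  assumes cont: "continuous_on UNIV z" and wd: "weak_deriv z g" and l2: "L2 g"
    and em: "e \<in> borel_measurable lborel" and e0: "\<And>x. 0 \<le> e x"
    and dpos: "d > 0" and ed: "\<And>x. x \<in> {0..1} \<Longrightarrow> d \<le> e x"
    and ezi: "integrable lborel (\<lambda>x. e x * (cmod (z x))^2)"
  shows "(cmod (z x))^2 \<le> ((\<integral>x. (cmod (g x))^2 \<partial>lborel) + (\<integral>x. e x * (cmod (z x))^2 \<partial>lborel))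
            * ((2/d + 1) + (1 + \<bar>x\<bar>)^2)"
proof -
  define A where "A = (\<integral>x. (cmod (g x))^2 \<partial>lborel)"
  define B where "B = (\<integral>x. e x * (cmod (z x))^2 \<partial>lborel)"
  define K where "K = (2/d + 1) + (1 + \<bar>x\<bar>)^2"
  have A0: "A \<ge> 0" unfolding A_def by simp
  have B0: "B \<ge> 0" unfolding B_def using e0 by simp
  have K0: "K > 0" unfolding K_def using dpos by (simp add: add_pos_nonneg)
  have zm: "z \<in> borel_measurable lborel"
    using cont by (simp add: borel_measurable_continuous_onI)
  have "continuous_on {0..1} (\<lambda>t. (cmod (z t))^2)"
    by (intro continuous_intros continuous_on_subset[OF cont]) auto
  then obtain y where y01: "y \<in> {0..1::real}" and ymin: "\<And>t. t \<in> {0..1} \<Longrightarrow> (cmod (z y))^2 \<le> (cmod (z t))^2"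
    using continuous_attains_inf[of "{0..1::real}" "\<lambda>t. (cmod (z t))^2"] by auto
  have nB: "(\<integral>\<^sup>+x. ennreal (e x * (cmod (z x))^2) \<partial>lborel) = ennreal B"
    unfolding B_def by (rule nn_integral_eq_integral[OF ezi]) (simp add: e0)
  have ind: "(\<integral>\<^sup>+x. ennreal (d * (cmod (z y))^2) * indicator {0..1::real} x \<partial>lborel) = ennreal (d * (cmod (z y))^2)"
    using nn_integral_cmult_indicator[of "{0..1::real}" lborel "ennreal (d * (cmod (z y))^2)"] by simp
  have "ennreal (d * (cmod (z y))^2) = (\<integral>\<^sup>+x. ennreal (d * (cmod (z y))^2) * indicator {0..1::real} x \<partial>lborel)"
    using ind by (rule sym)
  also have "\<dots> \<le> (\<integral>\<^sup>+x. ennreal (e x * (cmod (z x))^2) \<partial>lborel)"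
  proof (rule nn_integral_mono)
    fix t
    show "ennreal (d * (cmod (z y))^2) * indicator {0..1} t \<le> ennreal (e t * (cmod (z t))^2)"
    proof (cases "t \<in> {0..1}")
      case True
      then have "d * (cmod (z y))^2 \<le> e t * (cmod (z t))^2"
        using ymin[OF True] ed[OF True] dpos by (intro mult_mono) auto
      then show ?thesis using True by (simp add: ennreal_leI)
    qed simp
  qed
  finally have dzy: "d * (cmod (z y))^2 \<le> B" using nB B0 by (simp add: ennreal_le_iff)
  have main: "(cmod (z x))^2 \<le> (A + B + h) * K" if h: "h > 0" for h
  proof -
    define ep where "ep = sqrt (A + B + h)"
    have ep0: "ep > 0" unfolding ep_def using A0 B0 h by simp
    have ep2: "ep^2 = A + B + h" unfolding ep_def using A0 B0 h by simp
    define w where "w = cmod (z x - z y)"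
    have wb: "w \<le> ep * \<bar>x - y\<bar> / 2 + A/(2*ep)"
    proof (cases "y \<le> x")
      case True
      then show ?thesis using interval_bound[OF wd l2 ep0 True] unfolding w_def A_def by simp
    next
      case False
      then show ?thesis using interval_bound[OF wd l2 ep0, of x y] unfolding w_def A_def
        by (simp add: norm_minus_commute)
    qed
    have w0: "w \<ge> 0" unfolding w_def by simp
    have "w^2 \<le> (ep * \<bar>x - y\<bar> / 2 + A/(2*ep))^2"
      using wb w0 by (intro power_mono) auto
    also have "\<dots> \<le> 2*(ep * \<bar>x - y\<bar> / 2)^2 + 2*(A/(2*ep))^2" by (rule sq_sum_le)
    also have "\<dots> = ep^2 * \<bar>x - y\<bar>^2 / 2 + A * (A / ep^2) / 2"
      using ep0 by (simp add: field_simps power2_eq_square)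
    also have "A * (A / ep^2) \<le> A * 1"
      using A0 ep2 B0 h by (intro mult_left_mono) auto
    finally have w2: "w^2 \<le> ep^2 * \<bar>x - y\<bar>^2 / 2 + A/2" by simp
    have "cmod (z x) \<le> cmod (z y) + w" unfolding w_def by (metis norm_triangle_sub add.commute)
    then have "(cmod (z x))^2 \<le> (cmod (z y) + w)^2" by (intro power_mono) auto
    also have "\<dots> \<le> 2*(cmod (z y))^2 + 2*w^2" by (rule sq_sum_le)
    also have "\<dots> \<le> 2*(B/d) + (ep^2 * \<bar>x - y\<bar>^2 + A)"
    proof -
      have "(cmod (z y))^2 \<le> B/d" using dzy dpos by (simp add: pos_le_divide_eq mult.commute)
      then show ?thesis using w2 by linarith
    qed
    also have "\<dots> \<le> (A + B + h) * K"
    proof -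
      have xy: "\<bar>x - y\<bar> \<le> 1 + \<bar>x\<bar>" using y01 by auto
      have "\<bar>x - y\<bar>^2 \<le> (1 + \<bar>x\<bar>)^2" using xy by (intro power_mono) auto
      then have t1: "ep^2 * \<bar>x - y\<bar>^2 \<le> (A + B + h) * (1 + \<bar>x\<bar>)^2"
        unfolding ep2 using A0 B0 h by (intro mult_left_mono) auto
      have "B/d \<le> (A + B + h)/d" using A0 h dpos by (intro divide_right_mono) auto
      have "(A + B + h) * (2/d) - 2*(B/d) = 2*(A+h)/d" using dpos by (simp add: field_simps)
      moreover have "2*(A+h)/d \<ge> 0" using A0 h dpos by simp
      ultimately have t2: "2*(B/d) \<le> (A + B + h) * (2/d)" by (metis diff_ge_0_iff_ge)
      have t3: "A \<le> (A + B + h) * 1" using B0 h by simp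
      show ?thesis unfolding K_def using t1 t2 t3 by (simp add: algebra_simps)
    qed
    finally show ?thesis .
  qed
  have "(cmod (z x))^2 \<le> (A + B) * K"
  proof (rule field_le_epsilon)
    fix h :: real assume "h > 0"
    then have "(cmod (z x))^2 \<le> (A + B + h/K) * K" using main K0 by simp
    then show "(cmod (z x))^2 \<le> (A + B) * K + h" using K0 by (simp add: algebra_simps)
  qed
  then show ?thesis unfolding A_def B_def K_def .
qed

lemma nn_half_fin:
  assumes a: "a \<ge> 0"
  shows "(\<integral>\<^sup>+x. ennreal (exp(-x) * (a + (1+x)^2)) * indicator {0..} x \<partial>lborel) < \<infinity>"
proof -
  have "(\<integral>\<^sup>+x. ennreal (exp(-x) * (a + (1+x)^2)) * indicator {0..} x \<partial>lborel)
     \<le> (\<integral>\<^sup>+x. ennreal (a+2) * (ennreal (x^0 * exp(-x)) * indicator {0..} x)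
            + ennreal 2 * (ennreal (x^2 * exp(-x)) * indicator {0..} x) \<partial>lborel)"
  proof (rule nn_integral_mono)
    fix x :: real
    have "exp(-x) * (a + (1+x)^2) \<le> (a+2) * (x^0 * exp(-x)) + 2 * (x^2 * exp(-x))"
    proof -
      have "(1+x)^2 = 2 + 2*x^2 - (1-x)^2" by (simp add: power2_eq_square algebra_simps)
      then have "(1+x)^2 \<le> 2 + 2*x^2" by (smt (verit) zero_le_power2)
      then have "exp(-x) * (a + (1+x)^2) \<le> exp(-x) * (a + 2 + 2*x^2)"
        by (intro mult_left_mono) auto
      then show ?thesis by (simp add: algebra_simps)
    qed
    then show "ennreal (exp(-x) * (a + (1+x)^2)) * indicator {0..} x
        \<le> ennreal (a+2) * (ennreal (x^0 * exp(-x)) * indicator {0..} x)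
            + ennreal 2 * (ennreal (x^2 * exp(-x)) * indicator {0..} x)"
    proof (cases "x \<ge> 0")
      case True
      have "ennreal (a+2) * ennreal (x^0 * exp(-x)) + ennreal 2 * ennreal (x^2 * exp(-x))
          = ennreal ((a+2) * (x^0 * exp(-x)) + 2 * (x^2 * exp(-x)))"
        using a True by (simp add: ennreal_mult)
      with True \<open>exp(-x) * (a + (1+x)^2) \<le> _\<close> show ?thesis
        by (simp add: ennreal_leI)
    qed simp
  qed
  also have "\<dots> = ennreal (a+2) * (\<integral>\<^sup>+x. ennreal (x^0 * exp(-x)) * indicator {0..} x \<partial>lborel)
      + ennreal 2 * (\<integral>\<^sup>+x. ennreal (x^2 * exp(-x)) * indicator {0..} x \<partial>lborel)"
    by (subst nn_integral_add) (auto simp: nn_integral_cmult)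
  also have "\<dots> < \<infinity>"
    using nn_intergal_power_times_exp_Ici[of 0] nn_intergal_power_times_exp_Ici[of 2]
    by (simp add: ennreal_mult_less_top)
  finally show ?thesis .
qed

lemma W_fin:
  assumes a: "a \<ge> 0"
  shows "(\<integral>\<^sup>+x. ennreal (exp(-\<bar>x\<bar>) * (a + (1+\<bar>x\<bar>)^2)) \<partial>lborel) < \<infinity>"
proof -
  define h where "h = (\<lambda>x::real. ennreal (exp(-x) * (a + (1+x)^2)) * indicator {0..} x)"
  have hm: "h \<in> borel_measurable borel" unfolding h_def by measurable
  have "(\<integral>\<^sup>+x. ennreal (exp(-\<bar>x\<bar>) * (a + (1+\<bar>x\<bar>)^2)) \<partial>lborel)
     \<le> (\<integral>\<^sup>+x. h x + h (-x) \<partial>lborel)"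
    by (rule nn_integral_mono) (auto simp: h_def split: split_indicator)
  also have "\<dots> = (\<integral>\<^sup>+x. h x \<partial>lborel) + (\<integral>\<^sup>+x. h (-x) \<partial>lborel)"
    using hm by (subst nn_integral_add) auto
  also have "(\<integral>\<^sup>+x. h (-x) \<partial>lborel) = (\<integral>\<^sup>+x. h x \<partial>lborel)"
    using nn_integral_distr[of uminus lborel borel h] hm
    by (simp add: lborel_distr_uminus)
  also have "(\<integral>\<^sup>+x. h x \<partial>lborel) + (\<integral>\<^sup>+x. h x \<partial>lborel) < \<infinity>"
    using nn_half_fin[OF a] unfolding h_def by simp
  finally show ?thesis .
qed

lemma sech_eq: "1 - (tanh (y::real))^2 = 1 / (cosh y)^2"
proof -
  have h: "(cosh y)^2 = (sinh y)^2 + 1" by (rule cosh_square_eq)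
  have c0: "(cosh y)^2 \<noteq> 0" using cosh_real_pos[of y] by simp
  have "(tanh y)^2 = (sinh y)^2 / (cosh y)^2" unfolding tanh_def by (rule power_divide)
  also have "\<dots> = ((cosh y)^2 - 1) / (cosh y)^2" using h by simp
  also have "\<dots> = 1 - 1 / (cosh y)^2" using c0 by (simp add: diff_divide_distrib)
  finally show ?thesis by simp
qed

lemma cosh_bounds: "exp \<bar>y\<bar> / 2 \<le> cosh (y::real)" "cosh y \<le> exp \<bar>y\<bar>"
proof -
  have c: "cosh y = (exp \<bar>y\<bar> + exp (-\<bar>y\<bar>)) / 2"
    by (metis cosh_field_def cosh_real_abs)
  have "exp (-\<bar>y\<bar>) \<le> exp \<bar>y\<bar>" by simp
  then show "cosh y \<le> exp \<bar>y\<bar>" unfolding c by (simp add: field_simps)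
  have "exp (-\<bar>y\<bar>) > 0" by simp
  then show "exp \<bar>y\<bar> / 2 \<le> cosh y" unfolding c by (simp add: field_simps)
qed

lemma sech_upper: "1 - (tanh (y::real))^2 \<le> 4 * exp (-(2 * \<bar>y\<bar>))"
proof -
  define a where "a = exp \<bar>y\<bar>"
  have a0: "a > 0" unfolding a_def by simp
  have e: "exp (-(2 * \<bar>y\<bar>)) = inverse (a^2)" unfolding a_def by (simp only: exp_minus exp_double)
  have cb: "a/2 \<le> cosh y" unfolding a_def by (rule cosh_bounds(1))
  have h: "(a/2)^2 \<le> (cosh y)^2" using cb a0 by (intro power_mono) auto
  have p: "0 < (cosh y)^2 * (a/2)^2" using a0 by (intro mult_pos_pos) simp_all
  have "1 / (cosh y)^2 \<le> 1 / (a/2)^2" by (rule divide_left_mono[OF h _ p]) simp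
  also have "1 / (a/2)^2 = 4 * inverse (a^2)" using a0 by (simp add: field_simps)
  finally show ?thesis unfolding sech_eq e .
qed

lemma sech_lower: assumes "\<bar>y\<bar> \<le> 1" shows "1 - (tanh (y::real))^2 \<ge> 1/9"
proof -
  have "exp \<bar>y\<bar> \<le> exp 1" using assms by simp
  then have "cosh y \<le> 3" using cosh_bounds(2)[of y] exp_le by linarith
  then have "(cosh y)^2 \<le> 3^2" by (intro power_mono) auto
  then have "1/9 \<le> 1 / (cosh y)^2"
    by (simp add: divide_simps)
  then show ?thesis unfolding sech_eq .
qed

lemma sech_pos: "0 < 1 - (tanh (y::real))^2" "1 - (tanh y)^2 \<le> 1"
  using tanh_sq_lt1[of y] by auto

lemma Uf_bounds:
  assumes s: "2 \<le> s" "s \<le> 3" and q: "0 \<le> q" "q \<le> 1"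
  shows "0 \<le> Uf s q" "Uf s q \<le> 1" "Uf s q \<le> 3/2 * q" "7/16 * q \<le> Uf s q"
proof -
  define D where "D = 4 * s + 2 * (4 - s) * q"
  have "(4-s)*q \<ge> 0" using s q by simp
  then have D8: "D \<ge> 8" unfolding D_def using s q by (simp add: algebra_simps)
  have D16: "D \<le> 16" unfolding D_def using s q
  proof -
    have "(4-s)*q \<le> 2 * 1" using s q by (intro mult_mono) auto
    then show "4 * s + 2 * (4 - s) * q \<le> 16" using s by linarith
  qed
  have U: "Uf s q = (16 - s^2) * q / D" unfolding Uf_def D_def ..
  have Dp: "D > 0" using D8 by simp
  have n0: "16 - s^2 \<ge> 7" "16 - s^2 \<le> 12"
  proof -
    have "s^2 \<le> 3^2" using s by (intro power_mono) auto
    then show "16 - s^2 \<ge> 7" by simp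
    have "2^2 \<le> s^2" using s by (intro power_mono) auto
    then show "16 - s^2 \<le> 12" by simp
  qed
  show "0 \<le> Uf s q" unfolding U using n0 D8 q by simp
  show "Uf s q \<le> 1" unfolding U using D8
  proof -
    have "(8 + 2* s - s^2) * q \<le> (8 + 2* s - s^2) * 1"
      using q s n0 by (intro mult_left_mono) auto
    moreover have "8 + 2* s - s^2 \<le> 4* s"
    proof -
      have "0 \<le> (s+4)*(s-2)" using s by simp
      then show ?thesis by (simp add: algebra_simps power2_eq_square)
    qed
    moreover have "(16 - s^2) * q = D - 4 * s + (8 + 2* s - s^2) * q" unfolding D_def by (simp add: algebra_simps power2_eq_square)
    ultimately have "(16 - s^2) * q \<le> 1 * D" by (smt (verit))
    then show "(16 - s^2) * q / D \<le> 1" unfolding pos_divide_le_eq[OF Dp] .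
  qed
  show "Uf s q \<le> 3/2 * q" unfolding U
  proof -
    have "(16 - s^2) * q \<le> 12 * q" using n0 q by (intro mult_right_mono) auto
    also have "\<dots> = 3/2 * q * 8" by simp
    also have "\<dots> \<le> 3/2 * q * D" using D8 q by (intro mult_left_mono) auto
    finally show "(16 - s^2) * q / D \<le> 3/2 * q" unfolding pos_divide_le_eq[OF Dp] .
  qed
  show "7/16 * q \<le> Uf s q" unfolding U
  proof -
    have "7/16 * q * D \<le> 7/16 * q * 16" using D16 q by (intro mult_left_mono) auto
    also have "\<dots> = 7 * q" by simp
    also have "\<dots> \<le> (16 - s^2) * q" using n0 q by (intro mult_right_mono) auto
    finally show "7/16 * q \<le> (16 - s^2) * q / D" unfolding pos_le_divide_eq[OF Dp] .
  qed
qed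

lemma Uf_s_diff:
  assumes s: "2 \<le> s" "s \<le> 3" and q: "0 \<le> q" "q \<le> 1"
  shows "\<bar>Uf s q - Uf 2 q\<bar> \<le> 3/2 * (s - 2) * q"
proof -
  define D where "D = 4 * s + 2 * (4 - s) * q"
  define E where "E = 8 + 4 * q"
  have "(4-s)*q \<ge> 0" using s q by simp
  then have D8: "D \<ge> 8" unfolding D_def using s q by (simp add: algebra_simps)
  have E8: "E \<ge> 8" unfolding E_def using q by simp
  define P where "P = 8*(s+8) + 4*q*(s-4)"
  have P0: "P \<ge> 0" "P \<le> 96"
  proof -
    have "q*(4-s) \<le> 1 * 2" using s q by (intro mult_mono) auto
    moreover have "q*(4-s) \<ge> 0" using s q by simp
    ultimately show "P \<ge> 0" "P \<le> 96" unfolding P_def using s by (simp_all add: algebra_simps)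
  qed
  have u1: "Uf s q = (16 - s^2) * q / D" unfolding Uf_def D_def ..
  have u2: "Uf 2 q = 12 * q / E" unfolding Uf_def E_def by simp
  have "Uf s q - Uf 2 q = ((16 - s^2) * q * E - 12 * q * D) / (D * E)"
    unfolding u1 u2 using D8 E8 by (simp add: diff_frac_eq)
  also have "(16 - s^2) * q * E - 12 * q * D = - ((s-2) * q * P)"
    unfolding E_def D_def P_def by (simp add: algebra_simps power2_eq_square)
  finally have id: "Uf s q - Uf 2 q = - ((s-2) * q * P / (D * E))" by simp
  have "\<bar>Uf s q - Uf 2 q\<bar> = (s-2) * q * P / (D * E)" unfolding id using s q P0 D8 E8 by simp
  also have "\<dots> \<le> (s-2) * q * 96 / (8 * 8)"
  proof (rule frac_le)
    show "(s-2) * q * P \<le> (s-2) * q * 96" using s q P0 by (intro mult_left_mono) auto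
    show "8 * 8 \<le> D * E" using D8 E8 by (intro mult_mono) auto
  qed (use s q in auto)
  also have "\<dots> = 3/2 * (s - 2) * q" by simp
  finally show ?thesis .
qed

lemma Uf_2_diff:
  assumes q: "0 \<le> q" and p: "0 \<le> p"
  shows "\<bar>Uf 2 q - Uf 2 p\<bar> \<le> 3/2 * \<bar>q - p\<bar>"
proof -
  have u: "Uf 2 r = 3*r/(2+r)" if "r \<ge> 0" for r
  proof -
    have n: "2 + r \<noteq> 0" "8 + 4*r \<noteq> 0" using that by auto
    show ?thesis unfolding Uf_def using n by (simp add: field_simps)
  qed
  have "3*q/(2+q) - 3*p/(2+p) = (3*q*(2+p) - 3*p*(2+q)) / ((2+q)*(2+p))"
    using q p by (simp add: field_simps)
  also have "3*q*(2+p) - 3*p*(2+q) = 6 * (q - p)" by (simp add: algebra_simps)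
  finally have id: "Uf 2 q - Uf 2 p = 6 * (q - p) / ((2+q)*(2+p))" using u q p by simp
  have a1: "\<bar>Uf 2 q - Uf 2 p\<bar> = \<bar>6 * (q - p)\<bar> / \<bar>(2+q)*(2+p)\<bar>" unfolding id by (rule abs_divide)
  have a2: "\<bar>6 * (q - p)\<bar> = 6 * \<bar>q - p\<bar>" by (simp only: abs_mult)
  have a3: "\<bar>(2+q)*(2+p)\<bar> = (2+q)*(2+p)" using q p by simp
  have "\<bar>Uf 2 q - Uf 2 p\<bar> = 6 * \<bar>q - p\<bar> / ((2+q)*(2+p))" unfolding a1 a2 a3 ..
  also have "\<dots> \<le> 6 * \<bar>q - p\<bar> / (2*2)" using q p by (intro divide_left_mono mult_mono) auto
  finally show ?thesis by simp
qed

lemma kappa_props: fixes c :: real assumes c: "c^2 < 1/4"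
  shows "3/4 \<le> kappa c" "kappa c \<le> 1" "1 - kappa c \<le> c^2/4"
proof -
  define r where "r = sqrt (4 - c^2)"
  have c4: "c^2 \<le> 4" using c by linarith
  have r2: "r^2 = 4 - c^2" unfolding r_def using c4 by simp
  have r0: "r \<ge> 0" unfolding r_def using c4 by simp
  have k: "kappa c = r/2" unfolding kappa_def r_def ..
  have "r^2 \<le> 2^2" unfolding r2 by simp
  then have "r \<le> 2" by (rule power2_le_imp_le) simp
  then show "kappa c \<le> 1" unfolding k by simp
  have "(3/2)^2 \<le> r^2" unfolding r2 using c by (simp add: power2_eq_square)
  then have "3/2 \<le> r" using r0 by (rule power2_le_imp_le)
  then show "3/4 \<le> kappa c" unfolding k by simp
  have "(2 - r) * (2 + r) = c^2" using r2 by (simp add: algebra_simps power2_eq_square)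
  then have e: "2 - r = c^2 / (2 + r)" using r0 by (simp add: eq_divide_eq)
  have "c^2 / (2 + r) \<le> c^2 / 2" using r0 by (intro divide_left_mono) auto
  then have "2 - r \<le> c^2/2" unfolding e .
  then show "1 - kappa c \<le> c^2/4" unfolding k by simp
qed

lemma sC_diff: assumes c: "c^2 < 1" shows "sC c - 2 \<le> 3/4 * c^2"
proof -
  have s: "sC c \<ge> 2" "(sC c)^2 = 3*c^2+4" using sC_props[OF c] by auto
  have "(sC c - 2) * (sC c + 2) = 3 * c^2" using s by (simp add: algebra_simps power2_eq_square)
  then have e: "sC c - 2 = 3 * c^2 / (sC c + 2)" using s by (simp add: eq_divide_eq)
  have "3 * c^2 / (sC c + 2) \<le> 3 * c^2 / 4" using s by (intro divide_left_mono) auto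
  then show ?thesis unfolding e by simp
qed

lemma tanh_sq_abs: "(tanh (k * x))^2 = (tanh (k * \<bar>x\<bar>))^2" if "k \<ge> 0" for k x :: real
proof -
  have "k * \<bar>x\<bar> = \<bar>k * x\<bar>" using that by (simp add: abs_mult)
  then show ?thesis by (simp add: tanh_real_abs)
qed

lemma S_diff:
  fixes k x :: real
  assumes k: "3/4 \<le> k" "k \<le> 1"
  shows "\<bar>(1 - (tanh (k * x))^2) - (1 - (tanh x)^2)\<bar> \<le> 8 * (1 - k) * \<bar>x\<bar> * exp (-(2 * (k * \<bar>x\<bar>)))"
proof -
  define f where "f = (\<lambda>y::real. 1 - (tanh y)^2)"
  define a where "a = k * \<bar>x\<bar>"
  define b where "b = \<bar>x\<bar>"
  have fa: "1 - (tanh (k * x))^2 = f a" unfolding f_def a_def using tanh_sq_abs[of k x] k by simp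
  have fb: "1 - (tanh x)^2 = f b" unfolding f_def b_def using tanh_sq_abs[of 1 x] by simp
  have a0: "0 \<le> a" unfolding a_def using k by simp
  have ab: "a \<le> b" unfolding a_def b_def using k mult_right_mono[of k 1 "\<bar>x\<bar>"] by simp
  have rhs0: "0 \<le> 8 * (1 - k) * \<bar>x\<bar> * exp (-(2 * (k * \<bar>x\<bar>)))" using k by simp
  show ?thesis
  proof (cases "a = b")
    case True
    then show ?thesis unfolding fa fb using rhs0 by simp
  next
    case False
    with ab have ab': "a < b" by simp
    have der: "(f has_real_derivative (-(2 * tanh y * (1 - (tanh y)^2)))) (at y)" for y
      unfolding f_def by (auto intro!: derivative_eq_intros simp: power2_eq_square)
    obtain z where z: "a < z" "z < b" and mvt: "f b - f a = (b - a) * (-(2 * tanh z * (1 - (tanh z)^2)))"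
      using MVT2[OF ab', of f "\<lambda>y. -(2 * tanh y * (1 - (tanh y)^2))"] der by blast
    have S0: "0 \<le> 1 - (tanh z)^2" using sech_pos[of z] by simp
    have tz: "\<bar>tanh z\<bar> \<le> 1" using tanh_real_bounds[of z] by (simp add: abs_le_iff)
    have "\<bar>f b - f a\<bar> = (b - a) * (2 * \<bar>tanh z\<bar> * (1 - (tanh z)^2))"
      unfolding mvt using ab' S0 by (simp add: abs_mult)
    also have "\<dots> \<le> (b - a) * (2 * 1 * (4 * exp (-(2 * \<bar>z\<bar>))))"
      using ab' tz S0 sech_upper[of z] by (intro mult_left_mono mult_mono) auto
    also have "exp (-(2 * \<bar>z\<bar>)) \<le> exp (-(2 * a))" using z a0 by simp
    then have "(b - a) * (2 * 1 * (4 * exp (-(2 * \<bar>z\<bar>)))) \<le> (b - a) * (2 * 1 * (4 * exp (-(2 * a))))"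
      using ab' by (intro mult_left_mono) auto
    also have "(b - a) * (2 * 1 * (4 * exp (-(2 * a)))) = 8 * (1 - k) * \<bar>x\<bar> * exp (-(2 * (k * \<bar>x\<bar>)))"
      unfolding a_def b_def by (simp add: algebra_simps)
    finally show ?thesis unfolding fa fb by (simp add: abs_minus_commute)
  qed
qed

lemma xexp: fixes k x :: real assumes k: "3/4 \<le> k"
  shows "\<bar>x\<bar> * exp (-(2 * (k * \<bar>x\<bar>))) \<le> 2 * exp (-\<bar>x\<bar>)"
proof -
  define t where "t = \<bar>x\<bar>"
  have t0: "t \<ge> 0" unfolding t_def by simp
  have "3/2 * t \<le> (2 * k) * t" using k t0 by (intro mult_right_mono) auto
  then have "exp (-(2 * (k * t))) \<le> exp (-(t/2) + -t)" by simp
  also have "\<dots> = exp (-(t/2)) * exp (-t)" by (rule exp_add)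
  finally have e1: "exp (-(2 * (k * t))) \<le> exp (-(t/2)) * exp (-t)" .
  have "1 + t/2 \<le> exp (t/2)" by (rule exp_ge_add_one_self)
  then have "t \<le> 2 * exp (t/2)" by linarith
  then have "t * exp (-(t/2)) \<le> 2 * exp (t/2) * exp (-(t/2))" by (intro mult_right_mono) auto
  also have "\<dots> = 2" by (simp add: exp_minus_inverse)
  finally have e2: "t * exp (-(t/2)) \<le> 2" .
  have "t * exp (-(2 * (k * t))) \<le> t * (exp (-(t/2)) * exp (-t))" using e1 t0 by (rule mult_left_mono)
  also have "\<dots> = (t * exp (-(t/2))) * exp (-t)" by (simp only: mult.assoc)
  also have "\<dots> \<le> 2 * exp (-t)" using e2 by (intro mult_right_mono) auto
  finally show ?thesis unfolding t_def .
qed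

lemma eta_form: assumes c: "c^2 < 1"
  shows "eta c x = Uf (sC c) (1 - (tanh (kappa c * x))^2) * (2 - Uf (sC c) (1 - (tanh (kappa c * x))^2))"
proof -
  define U where "U = Uf (sC c) (1 - (tanh (kappa c * x))^2)"
  have m: "(cmod (phi c x))^2 = 1 - U" unfolding U_def by (rule phi_mod[OF c])
  have "eta c x = 1 - ((cmod (phi c x))^2)^2" unfolding eta_def by (simp add: power_mult[symmetric])
  also have "\<dots> = U * (2 - U)" unfolding m by (simp add: algebra_simps power2_eq_square)
  finally show ?thesis unfolding U_def .
qed

lemma eta_bounds: assumes c: "c^2 < 1/4"
  shows "0 \<le> eta c x" "eta c x \<le> 12 * exp (-\<bar>x\<bar>)" "x \<in> {0..1} \<Longrightarrow> 1/25 \<le> eta c x"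
proof -
  have c1: "c^2 < 1" using c by simp
  define k where "k = kappa c"
  have k: "3/4 \<le> k" "k \<le> 1" using kappa_props[OF c] unfolding k_def by auto
  define S where "S = 1 - (tanh (k * x))^2"
  have S: "0 \<le> S" "S \<le> 1" unfolding S_def using sech_pos[of "k*x"] by auto
  have s: "2 \<le> sC c" "sC c \<le> 3" using sC_props[OF c1] by auto
  define U where "U = Uf (sC c) S"
  have U: "0 \<le> U" "U \<le> 1" "U \<le> 3/2 * S" "7/16 * S \<le> U"
    unfolding U_def using Uf_bounds[OF s S] by auto
  have eta: "eta c x = U * (2 - U)" unfolding U_def S_def k_def by (rule eta_form[OF c1])
  show "0 \<le> eta c x" unfolding eta using U by simp
  have "eta c x \<le> U * 2" unfolding eta using U by (intro mult_left_mono) auto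
  also have "\<dots> \<le> 3 * S" using U by simp
  also have "S \<le> 4 * exp (-(2 * \<bar>k * x\<bar>))" unfolding S_def by (rule sech_upper)
  also have "exp (-(2 * \<bar>k * x\<bar>)) \<le> exp (-\<bar>x\<bar>)"
  proof -
    have "\<bar>k * x\<bar> = k * \<bar>x\<bar>" using k by (simp add: abs_mult)
    moreover have "1 * \<bar>x\<bar> \<le> (2 * k) * \<bar>x\<bar>" using k by (intro mult_right_mono) auto
    ultimately show ?thesis by simp
  qed
  finally show "eta c x \<le> 12 * exp (-\<bar>x\<bar>)" by simp
  assume x: "x \<in> {0..1}"
  have "\<bar>k * x\<bar> \<le> 1" using x k by (simp add: abs_mult mult_le_one)
  then have "1/9 \<le> S" unfolding S_def by (rule sech_lower)
  have "U * 1 \<le> U * (2 - U)" using U by (intro mult_left_mono) auto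
  moreover have "1/25 \<le> U" using \<open>1/9 \<le> S\<close> U(4) by linarith
  ultimately show "1/25 \<le> eta c x" unfolding eta by linarith
qed

lemma phi0_pow: "(phi0 x)^4 = ((cmod (phi 0 x))^2)^2"
  by (simp add: phi_def power_mult[symmetric])

lemma D_bound: assumes c: "c^2 < 1/4"
  shows "\<bar>(cmod (phi c x))^4 - (phi0 x)^4\<bar> \<le> 24 * c^2 * exp (-\<bar>x\<bar>)"
proof -
  have c1: "c^2 < 1" using c by simp
  have c01: "(0::real)^2 < 1" by simp
  define k where "k = kappa c"
  have k: "3/4 \<le> k" "k \<le> 1" "1 - k \<le> c^2/4" using kappa_props[OF c] unfolding k_def by auto
  define s where "s = sC c"
  have s: "2 \<le> s" "s \<le> 3" "s - 2 \<le> 3/4 * c^2" using sC_props[OF c1] sC_diff[OF c1] unfolding s_def by auto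
  define S1 where "S1 = 1 - (tanh (k * x))^2"
  define S0 where "S0 = 1 - (tanh x)^2"
  have S1: "0 \<le> S1" "S1 \<le> 1" unfolding S1_def using sech_pos[of "k*x"] by auto
  have S0: "0 \<le> S0" "S0 \<le> 1" unfolding S0_def using sech_pos[of "x"] by auto
  define U1 where "U1 = Uf s S1"
  define U0 where "U0 = Uf 2 S0"
  have U1: "0 \<le> U1" "U1 \<le> 1" unfolding U1_def using Uf_bounds[OF s(1,2) S1] by auto
  have U0: "0 \<le> U0" "U0 \<le> 1" unfolding U0_def using Uf_bounds[of 2 S0] S0 by auto
  have m1: "(cmod (phi c x))^2 = 1 - U1" unfolding U1_def S1_def s_def k_def by (rule phi_mod[OF c1])
  have m0: "(cmod (phi 0 x))^2 = 1 - U0"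
    using phi_mod[OF c01, of x] unfolding U0_def S0_def by (simp add: kappa_def sC_def)
  have "\<bar>(cmod (phi c x))^4 - (phi0 x)^4\<bar> = \<bar>(1 - U1)^2 - (1 - U0)^2\<bar>"
    unfolding phi0_pow m0[symmetric] m1[symmetric] by (simp add: power_mult[symmetric])
  also have "\<dots> = \<bar>U1 - U0\<bar> * \<bar>2 - U1 - U0\<bar>"
    by (simp add: abs_mult[symmetric] algebra_simps power2_eq_square)
  also have "\<dots> \<le> \<bar>U1 - U0\<bar> * 2" using U1 U0 by (intro mult_left_mono) auto
  finally have D1: "\<bar>(cmod (phi c x))^4 - (phi0 x)^4\<bar> \<le> \<bar>U1 - U0\<bar> * 2" .
  define E where "E = exp (-\<bar>x\<bar>)"
  have E0: "E \<ge> 0" unfolding E_def by simp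
  have kx: "\<bar>k * x\<bar> = k * \<bar>x\<bar>" using k by (simp add: abs_mult)
  have S1E: "S1 \<le> 4 * E"
  proof -
    have "S1 \<le> 4 * exp (-(2 * \<bar>k * x\<bar>))" unfolding S1_def by (rule sech_upper)
    also have "exp (-(2 * \<bar>k * x\<bar>)) \<le> E"
    proof -
      have "1 * \<bar>x\<bar> \<le> (2 * k) * \<bar>x\<bar>" using k by (intro mult_right_mono) auto
      then show ?thesis unfolding E_def kx by simp
    qed
    finally show ?thesis by simp
  qed
  have T1: "\<bar>U1 - Uf 2 S1\<bar> \<le> 9/2 * c^2 * E"
  proof -
    have "\<bar>U1 - Uf 2 S1\<bar> \<le> 3/2 * (s - 2) * S1" unfolding U1_def by (rule Uf_s_diff[OF s(1,2) S1])
    also have "\<dots> \<le> 3/2 * (3/4 * c^2) * (4 * E)"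
      using s S1 S1E by (intro mult_mono mult_left_mono) auto
    finally show ?thesis by (simp add: algebra_simps)
  qed
  have T2: "\<bar>Uf 2 S1 - U0\<bar> \<le> 6 * c^2 * E"
  proof -
    have "\<bar>Uf 2 S1 - U0\<bar> \<le> 3/2 * \<bar>S1 - S0\<bar>" unfolding U0_def by (rule Uf_2_diff[OF S1(1) S0(1)])
    also have "\<bar>S1 - S0\<bar> \<le> 8 * (1 - k) * \<bar>x\<bar> * exp (-(2 * (k * \<bar>x\<bar>)))"
      unfolding S1_def S0_def by (rule S_diff[OF k(1,2)])
    also have "\<dots> = 8 * (1 - k) * (\<bar>x\<bar> * exp (-(2 * (k * \<bar>x\<bar>))))" by simp
    also have "\<dots> \<le> 8 * (c^2/4) * (2 * E)"
    proof (rule mult_mono)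
      show "8 * (1 - k) \<le> 8 * (c^2/4)" using k(3) by simp
      show "\<bar>x\<bar> * exp (-(2 * (k * \<bar>x\<bar>))) \<le> 2 * E" unfolding E_def by (rule xexp[OF k(1)])
    qed simp_all
    finally show ?thesis by (simp add: algebra_simps)
  qed
  have "\<bar>U1 - U0\<bar> \<le> \<bar>U1 - Uf 2 S1\<bar> + \<bar>Uf 2 S1 - U0\<bar>" by linarith
  also have "\<dots> \<le> 9/2 * c^2 * E + 6 * c^2 * E" using T1 T2 by linarith
  finally have "\<bar>U1 - U0\<bar> * 2 \<le> 21 * c^2 * E" by (simp add: algebra_simps)
  also have "\<dots> \<le> 24 * c^2 * E" using E0 by (intro mult_right_mono) auto
  finally show ?thesis using D1 unfolding E_def by linarith
qed

definition Wc :: real where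
  "Wc = enn2real (\<integral>\<^sup>+x. ennreal (exp(-\<bar>x\<bar>) * (51 + (1+\<bar>x\<bar>)^2)) \<partial>lborel)"

lemma Wc_eq: "(\<integral>\<^sup>+x. ennreal (exp(-\<bar>x\<bar>) * (51 + (1+\<bar>x\<bar>)^2)) \<partial>lborel) = ennreal Wc"
  unfolding Wc_def using W_fin[of 51] by (simp add: ennreal_enn2real_if)

lemma Wc0: "Wc \<ge> 0" unfolding Wc_def by simp

lemma eta_meas: assumes c: "c^2 < 1" shows "eta c \<in> borel_measurable lborel"
proof -
  have tm[measurable]: "(\<lambda>x. tanh (kappa c * x)) \<in> borel_measurable borel"
    by (intro borel_measurable_continuous_onI continuous_intros) auto
  have "eta c = (\<lambda>x. Uf (sC c) (1 - (tanh (kappa c * x))^2) * (2 - Uf (sC c) (1 - (tanh (kappa c * x))^2)))"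
    using eta_form[OF c] by (intro ext)
  also have "\<dots> \<in> borel_measurable borel" unfolding Uf_def by measurable
  finally show ?thesis by simp
qed

lemma dH_props: assumes "z \<in> Hspace c" shows "weak_deriv z (dH z)" "L2 (dH z)"
proof -
  have "\<exists>g. weak_deriv z g \<and> L2 g" using assms by (simp add: Hspace_def)
  then have "weak_deriv z (dH z) \<and> L2 (dH z)" unfolding dH_def by (rule someI_ex)
  then show "weak_deriv z (dH z)" "L2 (dH z)" by auto
qed

lemma Hnorm_sq: assumes "\<And>x. 0 \<le> eta c x"
  shows "(Hnorm c z)^2 = (\<integral>x. (cmod (dH z x))^2 \<partial>lborel) + (\<integral>x. eta c x * (cmod (z x))^2 \<partial>lborel)"
proof -
  have "0 \<le> (\<integral>x. (cmod (dH z x))^2 \<partial>lborel)" by simp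
  moreover have "0 \<le> (\<integral>x. eta c x * (cmod (z x))^2 \<partial>lborel)" using assms by simp
  ultimately show ?thesis unfolding Hnorm_def by simp
qed

lemma hardy_main:
  assumes c: "c^2 < 1/4" and z: "z \<in> Hspace c"
  shows "(\<integral>\<^sup>+x. ennreal (exp(-\<bar>x\<bar>) * (cmod (z x))^2) \<partial>lborel) \<le> ennreal (Wc * (Hnorm c z)^2)"
proof -
  have c1: "c^2 < 1" using c by simp
  have cont: "continuous_on UNIV z" and zi: "integrable lborel (\<lambda>x. eta c x * (cmod (z x))^2)"
    using z by (auto simp: Hspace_def)
  define N where "N = (Hnorm c z)^2"
  have N: "N = (\<integral>x. (cmod (dH z x))^2 \<partial>lborel) + (\<integral>x. eta c x * (cmod (z x))^2 \<partial>lborel)"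
    unfolding N_def by (rule Hnorm_sq) (rule eta_bounds[OF c])
  have N0: "N \<ge> 0" unfolding N_def by simp
  have pw: "(cmod (z x))^2 \<le> N * ((2/(1/25) + 1) + (1 + \<bar>x\<bar>)^2)" for x
    unfolding N
    by (rule hardy_pointwise[OF cont dH_props(1)[OF z] dH_props(2)[OF z] eta_meas[OF c1] eta_bounds(1)[OF c] _ eta_bounds(3)[OF c] zi]) simp_all
  have "(\<integral>\<^sup>+x. ennreal (exp(-\<bar>x\<bar>) * (cmod (z x))^2) \<partial>lborel)
      \<le> (\<integral>\<^sup>+x. ennreal N * ennreal (exp(-\<bar>x\<bar>) * (51 + (1+\<bar>x\<bar>)^2)) \<partial>lborel)"
  proof (rule nn_integral_mono)
    fix x
    have "exp(-\<bar>x\<bar>) * (cmod (z x))^2 \<le> exp(-\<bar>x\<bar>) * (N * (51 + (1 + \<bar>x\<bar>)^2))"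
      using pw[of x] by (intro mult_left_mono) auto
    also have "\<dots> = N * (exp(-\<bar>x\<bar>) * (51 + (1+\<bar>x\<bar>)^2))" by simp
    finally show "ennreal (exp(-\<bar>x\<bar>) * (cmod (z x))^2) \<le> ennreal N * ennreal (exp(-\<bar>x\<bar>) * (51 + (1+\<bar>x\<bar>)^2))"
      using N0 by (simp add: ennreal_mult[symmetric] ennreal_leI)
  qed
  also have "\<dots> = ennreal N * ennreal Wc"
    by (subst nn_integral_cmult) (auto simp: Wc_eq)
  also have "\<dots> = ennreal (Wc * N)" using N0 Wc0 by (simp add: ennreal_mult[symmetric] mult.commute)
  finally show ?thesis unfolding N_def .
qed

lemma cross:
  assumes c1: "c1^2 < 1/4" and c2: "c2^2 < 1/4" and z: "z \<in> Hspace c1"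
  shows "integrable lborel (\<lambda>x. eta c2 x * (cmod (z x))^2)"
    "(\<integral>x. eta c2 x * (cmod (z x))^2 \<partial>lborel) \<le> 12 * Wc * (Hnorm c1 z)^2"
proof -
  have c21: "c2^2 < 1" using c2 by simp
  have zm: "z \<in> borel_measurable lborel" using z by (simp add: Hspace_def)
  have em: "eta c2 \<in> borel_measurable lborel" by (rule eta_meas[OF c21])
  have fm: "(\<lambda>x. eta c2 x * (cmod (z x))^2) \<in> borel_measurable lborel" using zm em by measurable
  have "(\<integral>\<^sup>+x. ennreal (eta c2 x * (cmod (z x))^2) \<partial>lborel)
      \<le> (\<integral>\<^sup>+x. ennreal 12 * ennreal (exp(-\<bar>x\<bar>) * (cmod (z x))^2) \<partial>lborel)"
  proof (rule nn_integral_mono)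
    fix x
    have "eta c2 x * (cmod (z x))^2 \<le> (12 * exp (-\<bar>x\<bar>)) * (cmod (z x))^2"
      using eta_bounds(2)[OF c2, of x] by (intro mult_right_mono) auto
    then have "eta c2 x * (cmod (z x))^2 \<le> 12 * (exp (-\<bar>x\<bar>) * (cmod (z x))^2)"
      by (simp only: mult.assoc)
    then have "ennreal (eta c2 x * (cmod (z x))^2) \<le> ennreal (12 * (exp(-\<bar>x\<bar>) * (cmod (z x))^2))"
      by (rule ennreal_leI)
    also have "ennreal (12 * (exp(-\<bar>x\<bar>) * (cmod (z x))^2)) = ennreal 12 * ennreal (exp(-\<bar>x\<bar>) * (cmod (z x))^2)"
      by (rule ennreal_mult) simp_all
    finally show "ennreal (eta c2 x * (cmod (z x))^2) \<le> ennreal 12 * ennreal (exp(-\<bar>x\<bar>) * (cmod (z x))^2)" .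
  qed
  also have "\<dots> = ennreal 12 * (\<integral>\<^sup>+x. ennreal (exp(-\<bar>x\<bar>) * (cmod (z x))^2) \<partial>lborel)"
    using zm by (subst nn_integral_cmult) auto
  also have "\<dots> \<le> ennreal 12 * ennreal (Wc * (Hnorm c1 z)^2)"
    by (intro mult_left_mono hardy_main[OF c1 z]) auto
  also have "\<dots> = ennreal (12 * (Wc * (Hnorm c1 z)^2))" using Wc0 by (intro ennreal_mult[symmetric]) simp_all
  also have "\<dots> = ennreal (12 * Wc * (Hnorm c1 z)^2)" by (simp only: mult.assoc)
  finally have I: "(\<integral>\<^sup>+x. ennreal (eta c2 x * (cmod (z x))^2) \<partial>lborel) \<le> ennreal (12 * Wc * (Hnorm c1 z)^2)" .
  have nn: "\<And>x. 0 \<le> eta c2 x * (cmod (z x))^2" using eta_bounds(1)[OF c2] by simp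
  show int: "integrable lborel (\<lambda>x. eta c2 x * (cmod (z x))^2)"
  proof (rule integrableI_bounded[OF fm])
    have "(\<integral>\<^sup>+x. ennreal (norm (eta c2 x * (cmod (z x))^2)) \<partial>lborel) = (\<integral>\<^sup>+x. ennreal (eta c2 x * (cmod (z x))^2) \<partial>lborel)"
      using nn by (intro nn_integral_cong) simp
    also have "\<dots> < \<infinity>" using I by (simp add: le_less_trans)
    finally show "(\<integral>\<^sup>+x. ennreal (norm (eta c2 x * (cmod (z x))^2)) \<partial>lborel) < \<infinity>" .
  qed
  have "ennreal (\<integral>x. eta c2 x * (cmod (z x))^2 \<partial>lborel) = (\<integral>\<^sup>+x. ennreal (eta c2 x * (cmod (z x))^2) \<partial>lborel)"
    using nn_integral_eq_integral[OF int] nn by simp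
  with I have "ennreal (\<integral>x. eta c2 x * (cmod (z x))^2 \<partial>lborel) \<le> ennreal (12 * Wc * (Hnorm c1 z)^2)" by simp
  then show "(\<integral>x. eta c2 x * (cmod (z x))^2 \<partial>lborel) \<le> 12 * Wc * (Hnorm c1 z)^2"
    using Wc0 by (subst (asm) ennreal_le_iff) auto
qed

lemma Hspace_sub: assumes c1: "c1^2 < 1/4" and c2: "c2^2 < 1/4" and z: "z \<in> Hspace c1"
  shows "z \<in> Hspace c2"
  using z cross(1)[OF c1 c2 z] by (simp add: Hspace_def)

lemma norm_cmp: assumes c1: "c1^2 < 1/4" and c2: "c2^2 < 1/4" and z: "z \<in> Hspace c1"
  shows "(Hnorm c2 z)^2 \<le> (1 + 12 * Wc) * (Hnorm c1 z)^2"
proof -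
  define A where "A = (\<integral>x. (cmod (dH z x))^2 \<partial>lborel)"
  have A0: "A \<ge> 0" unfolding A_def by simp
  have h1: "(Hnorm c1 z)^2 = A + (\<integral>x. eta c1 x * (cmod (z x))^2 \<partial>lborel)"
    unfolding A_def by (rule Hnorm_sq) (rule eta_bounds[OF c1])
  have h2: "(Hnorm c2 z)^2 = A + (\<integral>x. eta c2 x * (cmod (z x))^2 \<partial>lborel)"
    unfolding A_def by (rule Hnorm_sq) (rule eta_bounds[OF c2])
  have B1: "(\<integral>x. eta c1 x * (cmod (z x))^2 \<partial>lborel) \<ge> 0" using eta_bounds(1)[OF c1] by simp
  have "(Hnorm c2 z)^2 \<le> A + 12 * Wc * (Hnorm c1 z)^2" unfolding h2 using cross(2)[OF c1 c2 z] by simp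
  also have "A \<le> (Hnorm c1 z)^2" unfolding h1 using B1 by simp
  then have "A + 12 * Wc * (Hnorm c1 z)^2 \<le> (1 + 12 * Wc) * (Hnorm c1 z)^2" by (simp add: algebra_simps)
  finally show ?thesis .
qed

lemma sq_lt: fixes c :: real assumes "\<bar>c\<bar> < 1/2" shows "c^2 < 1/4"
proof -
  have "\<bar>c\<bar> * \<bar>c\<bar> < 1/2 * (1/2)" using assms by (intro mult_strict_mono) auto
  moreover have "c^2 = \<bar>c\<bar> * \<bar>c\<bar>" by (simp add: power2_eq_square)
  ultimately show ?thesis by simp
qed

theorem lemma2p6:
  shows "\<exists>cc::real. 0 < cc \<and> cc < 2 \<and>
    (\<exists>C::real. C > 0 \<and>
      (\<forall>c cs z. \<bar>c\<bar> < cc \<longrightarrow> \<bar>cs\<bar> < cc \<longrightarrow> z \<in> Hspace cs \<longrightarrow>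
         (\<integral>\<^sup>+ x. ennreal (\<bar>(cmod (phi c x))^4 - (phi0 x)^4\<bar> * (cmod (z x))^2) \<partial>lborel)
           \<le> ennreal (C * c^2 * (Hnorm cs z)^2))) \<and>
    (\<forall>c. \<bar>c\<bar> < cc \<longrightarrow> Hspace c = Hspace 0) \<and>
    (\<exists>s1 s2::real. s1 > 0 \<and> s2 > 0 \<and>
      (\<forall>c z. \<bar>c\<bar> < cc \<longrightarrow> z \<in> Hspace 0 \<longrightarrow>
         s1 * (Hnorm 0 z)^2 \<le> (Hnorm c z)^2 \<and> (Hnorm c z)^2 \<le> s2 * (Hnorm 0 z)^2))"
proof -
  define C where "C = 24 * Wc + 1"
  have C0: "C > 0" unfolding C_def using Wc0 by simp
  have P1: "(\<integral>\<^sup>+ x. ennreal (\<bar>(cmod (phi c x))^4 - (phi0 x)^4\<bar> * (cmod (z x))^2) \<partial>lborel)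
           \<le> ennreal (C * c^2 * (Hnorm cs z)^2)"
    if c: "\<bar>c\<bar> < 1/2" and cs: "\<bar>cs\<bar> < 1/2" and z: "z \<in> Hspace cs" for c cs z
  proof -
    have c4: "c^2 < 1/4" using sq_lt[OF c] .
    have cs4: "cs^2 < 1/4" using sq_lt[OF cs] .
    have zm: "z \<in> borel_measurable lborel" using z by (simp add: Hspace_def)
    have "(\<integral>\<^sup>+ x. ennreal (\<bar>(cmod (phi c x))^4 - (phi0 x)^4\<bar> * (cmod (z x))^2) \<partial>lborel)
        \<le> (\<integral>\<^sup>+ x. ennreal (24 * c^2) * ennreal (exp (-\<bar>x\<bar>) * (cmod (z x))^2) \<partial>lborel)"
    proof (rule nn_integral_mono)
      fix x
      have "\<bar>(cmod (phi c x))^4 - (phi0 x)^4\<bar> * (cmod (z x))^2 \<le> (24 * c^2 * exp (-\<bar>x\<bar>)) * (cmod (z x))^2"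
        using D_bound[OF c4, of x] by (intro mult_right_mono) auto
      then have "ennreal (\<bar>(cmod (phi c x))^4 - (phi0 x)^4\<bar> * (cmod (z x))^2) \<le> ennreal ((24 * c^2) * (exp (-\<bar>x\<bar>) * (cmod (z x))^2))"
        by (intro ennreal_leI) (simp only: mult.assoc)
      also have "\<dots> = ennreal (24 * c^2) * ennreal (exp (-\<bar>x\<bar>) * (cmod (z x))^2)"
        by (rule ennreal_mult) simp_all
      finally show "ennreal (\<bar>(cmod (phi c x))^4 - (phi0 x)^4\<bar> * (cmod (z x))^2) \<le> ennreal (24 * c^2) * ennreal (exp (-\<bar>x\<bar>) * (cmod (z x))^2)" .
    qed
    also have "\<dots> = ennreal (24 * c^2) * (\<integral>\<^sup>+ x. ennreal (exp (-\<bar>x\<bar>) * (cmod (z x))^2) \<partial>lborel)"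
      using zm by (subst nn_integral_cmult) auto
    also have "\<dots> \<le> ennreal (24 * c^2) * ennreal (Wc * (Hnorm cs z)^2)"
      by (intro mult_left_mono hardy_main[OF cs4 z]) auto
    also have "\<dots> = ennreal ((24 * c^2) * (Wc * (Hnorm cs z)^2))" using Wc0 by (intro ennreal_mult[symmetric]) simp_all
    also have "\<dots> \<le> ennreal (C * c^2 * (Hnorm cs z)^2)"
    proof (rule ennreal_leI)
      have "0 \<le> c^2 * (Hnorm cs z)^2" by simp
      then have "24 * Wc * (c^2 * (Hnorm cs z)^2) \<le> C * (c^2 * (Hnorm cs z)^2)"
        unfolding C_def by (intro mult_right_mono) auto
      then show "(24 * c^2) * (Wc * (Hnorm cs z)^2) \<le> C * c^2 * (Hnorm cs z)^2" by (simp add: algebra_simps)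
    qed
    finally show ?thesis .
  qed
  have P2: "Hspace c = Hspace 0" if c: "\<bar>c\<bar> < 1/2" for c
  proof -
    have c4: "c^2 < 1/4" using sq_lt[OF c] .
    have z4: "(0::real)^2 < 1/4" by simp
    show ?thesis using Hspace_sub[OF c4 z4] Hspace_sub[OF z4 c4] by blast
  qed
  define s2 where "s2 = 1 + 12 * Wc"
  have s20: "s2 > 0" unfolding s2_def using Wc0 by simp
  have P3: "(1/s2) * (Hnorm 0 z)^2 \<le> (Hnorm c z)^2 \<and> (Hnorm c z)^2 \<le> s2 * (Hnorm 0 z)^2"
    if c: "\<bar>c\<bar> < 1/2" and z: "z \<in> Hspace 0" for c z
  proof -
    have c4: "c^2 < 1/4" using sq_lt[OF c] .
    have z4: "(0::real)^2 < 1/4" by simp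
    have zc: "z \<in> Hspace c" using Hspace_sub[OF z4 c4 z] .
    have a: "(Hnorm c z)^2 \<le> s2 * (Hnorm 0 z)^2" unfolding s2_def by (rule norm_cmp[OF z4 c4 z])
    have b: "(Hnorm 0 z)^2 \<le> s2 * (Hnorm c z)^2" unfolding s2_def by (rule norm_cmp[OF c4 z4 zc])
    have "(1/s2) * (Hnorm 0 z)^2 \<le> (1/s2) * (s2 * (Hnorm c z)^2)" using b s20 by (intro mult_left_mono) auto
    also have "\<dots> = (Hnorm c z)^2" using s20 by simp
    finally show ?thesis using a by simp
  qed
  show ?thesis
    apply (rule exI[of _ "1/2"])
    apply (intro conjI)
       apply simp
      apply simp
     apply (rule exI[of _ C]) using C0 P1 apply blast
     using P2 apply blast
    apply (rule exI[of _ "1/s2"], rule exI[of _ s2])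
    using s20 P3 by auto
qed

end
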